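(* Let $\mathscr{C}_n$ be the set of Catalan words of length $2n$. For every integer $m\ge 2$ and every $0\le r\le m-1$, $$\lim_{n\to\infty}\frac{\left|\{w\in\mathscr{C}_n:\ \mathrm{maj}(w)\equiv r\pmod m\}\right|}{|\mathscr{C}_n|}=\frac1m ,$$ where $|\mathscr{C}_n|=\frac{1}{n+1}\binom{2n}{n}$. That is, the major index over Catalan words of length $2n$ has the balanced property.
   Context: A Catalan word of length $2n$ is a sequence $w=w_1w_2\cdots w_{2n}$ consisting of $n$ zeros and $n$ ones such that no prefix contains more $1$'s than $0$'s. Its major index is $\mathrm{maj}(w)=\sum_{i:\,w_i>w_{i+1}} i$. A statistic $\xi$ on sets $Q_n$ has the balanced property if for every $m\ge 2$ and every $0\le r\le m-1$, $\lim_{n\to\infty}|\{\pi\in Q_n:\xi(\pi)\equiv r \pmod m\}|/|Q_n| = 1/m$. *)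

theory Defs
  imports Complex_Main
begin

text \<open>A word is a list of naturals over the alphabet {0,1}; positions are 1-based in the paper,
  so letter w_i is the list entry w ! (i - 1).\<close>

definition catalan_words :: "nat \<Rightarrow> nat list set" where
  "catalan_words n = {w. length w = 2 * n \<and> set w \<subseteq> {0, 1}
      \<and> count_list w 0 = n \<and> count_list w 1 = n
      \<and> (\<forall>k \<le> length w. count_list (take k w) 1 \<le> count_list (take k w) 0)}"

definition maj :: "nat list \<Rightarrow> nat" where
  "maj w = (\<Sum>i \<in> {i. 1 \<le> i \<and> i < length w \<and> w ! (i - 1) > w ! i}. i)"

end

theory Submission
  imports Defs "HOL-Combinatorics.Multiset_Permutations"
begin



definition W :: "nat \<Rightarrow> nat \<Rightarrow> nat list" where
  "W m t = [0,0] @ replicate t 1 @ 0 # replicate (m+1-t) 1"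

definition Wset :: "nat \<Rightarrow> nat list set" where "Wset m = W m ` {1..m}"

definition idx :: "nat \<Rightarrow> nat list \<Rightarrow> nat" where
  "idx m B = (THE t. t \<in> {1..m} \<and> W m t = B)"

lemma length_W[simp]: "t \<le> m+1 \<Longrightarrow> length (W m t) = m+4"
  by (simp add: W_def)

lemma W_nth1: "2 \<le> i \<Longrightarrow> i < t+2 \<Longrightarrow> W m t ! i = 1"
  by (simp add: W_def nth_append)

lemma W_nth0: "W m t ! (t+2) = 0"
  by (simp add: W_def nth_append)

lemma W_inj: assumes "W m s = W m t" shows "s = t"
proof (rule ccontr)
  assume "s \<noteq> t"
  then consider "s < t" | "t < s" by linarith
  then show False
  proof cases
    case 1 then show False using assms W_nth0[of m s] W_nth1[of "s+2" t m] by simp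
  next
    case 2 then show False using assms W_nth0[of m t] W_nth1[of "t+2" s m] by simp
  qed
qed

lemma idx_W[simp]: "t \<in> {1..m} \<Longrightarrow> idx m (W m t) = t"
  unfolding idx_def by (rule the_equality) (auto dest: W_inj)

lemma count_rep[simp]: "count_list (replicate n x) y = (if x = y then n else 0)"
  by (induction n) auto

lemma count_W0: "t \<le> m+1 \<Longrightarrow> count_list (W m t) 0 = 3"
  by (simp add: W_def)
lemma count_W1: "t \<le> m+1 \<Longrightarrow> count_list (W m t) (Suc 0) = m+1"
  by (simp add: W_def)
lemma count_Wo: "a \<noteq> 0 \<Longrightarrow> a \<noteq> 1 \<Longrightarrow> count_list (W m t) a = 0"
  by (simp add: W_def)
lemma set_W: "set (W m t) \<subseteq> {0,1}"
  by (auto simp add: W_def)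

function stp :: "nat \<Rightarrow> (nat\<Rightarrow>nat) \<Rightarrow> nat list \<Rightarrow> nat list" where
 "stp m \<sigma> w = (if length w < m+4 then w
     else if take (m+4) w \<in> Wset m then W m (\<sigma> (idx m (take (m+4) w))) @ drop (m+4) w
     else take (m+4) w @ stp m \<sigma> (drop (m+4) w))"
  by pat_completeness auto
termination by (relation "measure (\<lambda>(m,\<sigma>,w). length w)") auto

declare stp.simps[simp del]

function hasW :: "nat \<Rightarrow> nat list \<Rightarrow> bool" where
 "hasW m w = (if length w < m+4 then False
     else take (m+4) w \<in> Wset m \<or> hasW m (drop (m+4) w))"
  by pat_completeness auto
termination by (relation "measure (\<lambda>(m,w). length w)") auto

declare hasW.simps[simp del]

lemma stp_short: "length w < m+4 \<Longrightarrow> stp m \<sigma> w = w"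
  by (subst stp.simps) simp
lemma stp_blk: "\<not> length w < m+4 \<Longrightarrow> take (m+4) w \<in> Wset m \<Longrightarrow>
   stp m \<sigma> w = W m (\<sigma> (idx m (take (m+4) w))) @ drop (m+4) w"
  by (subst stp.simps) simp
lemma stp_nblk: "\<not> length w < m+4 \<Longrightarrow> take (m+4) w \<notin> Wset m \<Longrightarrow>
   stp m \<sigma> w = take (m+4) w @ stp m \<sigma> (drop (m+4) w)"
  by (subst stp.simps) simp

locale perm = fixes m :: nat and \<sigma> :: "nat \<Rightarrow> nat"
  assumes sig: "\<And>t. t \<in> {1..m} \<Longrightarrow> \<sigma> t \<in> {1..m}"
begin

lemma blk: assumes "take (m+4) w \<in> Wset m"
  obtains t where "t \<in> {1..m}" "take (m+4) w = W m t" "\<sigma> (idx m (take (m+4) w)) \<in> {1..m}"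
  using assms sig unfolding Wset_def by auto

lemma length_stp: "length (stp m \<sigma> w) = length w"
proof (induction w rule: length_induct)
  case (1 w)
  show ?case
  proof (cases "length w < m+4")
    case True then show ?thesis by (simp add: stp_short)
  next
    case False
    show ?thesis
    proof (cases "take (m+4) w \<in> Wset m")
      case True
      then obtain t where "\<sigma> (idx m (take (m+4) w)) \<in> {1..m}" using blk by blast
      then show ?thesis using False True by (simp add: stp_blk)
    next
      case F2: False
      then show ?thesis using False 1 by (simp add: stp_nblk)
    qed
  qed
qed

end




definition Dset :: "nat list \<Rightarrow> nat set" where
  "Dset w = {i. 1 \<le> i \<and> i < length w \<and> w ! (i - 1) > w ! i}"
definition des :: "nat list \<Rightarrow> nat" where "des w = card (Dset w)"

lemma maj_Dset: "maj w = sum id (Dset w)"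
  by (simp add: maj_def Dset_def)

lemma finite_Dset[simp]: "finite (Dset w)"
  by (rule finite_subset[of _ "{..<length w}"]) (auto simp: Dset_def)

lemma Dset_Nil[simp]: "Dset [] = {}" by (simp add: Dset_def)
lemma Dset_single[simp]: "Dset [a] = {}" by (simp add: Dset_def)

lemma Dset_Cons: "Dset (a # v) = (if v \<noteq> [] \<and> a > hd v then {1} else {}) \<union> Suc ` Dset v"
proof (rule set_eqI)
  fix i
  show "i \<in> Dset (a # v) \<longleftrightarrow> i \<in> (if v \<noteq> [] \<and> a > hd v then {1} else {}) \<union> Suc ` Dset v"
  proof (cases i)
    case 0 then show ?thesis by (auto simp: Dset_def)
  next
    case (Suc j)
    show ?thesis
    proof (cases j)
      case 0 then show ?thesis using Suc by (cases v) (auto simp: Dset_def)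
    next
      case (Suc k)
      then show ?thesis using \<open>i = Suc j\<close> by (auto simp: Dset_def image_iff)
    qed
  qed
qed

lemma one_notin_Suc_Dset: "1 \<notin> Suc ` Dset v"
  by (auto simp: Dset_def)

lemma des_Cons: "des (a # v) = (if v \<noteq> [] \<and> a > hd v then 1 else 0) + des v"
  unfolding des_def Dset_Cons using one_notin_Suc_Dset[of v]
  by (auto simp: card_image card_insert_if)

lemma maj_Cons: "maj (a # v) = (if v \<noteq> [] \<and> a > hd v then 1 else 0) + maj v + des v"
proof -
  have "sum id (Suc ` Dset v) = sum id (Dset v) + card (Dset v)"
  proof -
    have "finite D \<Longrightarrow> sum Suc D = sum id D + card D" for D :: "nat set"
      by (induction D rule: finite_induct) auto
    then show ?thesis by (simp add: sum.reindex)
  qed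
  then show ?thesis
    unfolding maj_Dset des_def Dset_Cons using one_notin_Suc_Dset[of v]
    by (auto simp: sum.insert_if)
qed

lemma maj_single[simp]: "maj [a] = 0" by (simp add: maj_Dset)
lemma des_single[simp]: "des [a] = 0" by (simp add: des_def)
lemma maj_Nil[simp]: "maj [] = 0" by (simp add: maj_Dset)
lemma des_Nil[simp]: "des [] = 0" by (simp add: des_def)

lemma des_append: "x \<noteq> [] \<Longrightarrow>
  des (x @ y) = des x + (if y \<noteq> [] \<and> last x > hd y then 1 else 0) + des y"
proof (induction x)
  case Nil then show ?case by simp
next
  case (Cons a x)
  show ?case
  proof (cases "x = []")
    case True then show ?thesis by (simp add: des_Cons)
  next
    case False
    then show ?thesis using Cons by (simp add: des_Cons)
  qed
qed

lemma maj_append: "x \<noteq> [] \<Longrightarrow>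
  maj (x @ y) = maj x + (if y \<noteq> [] \<and> last x > hd y then length x else 0) + maj y + length x * des y"
proof (induction x)
  case Nil then show ?case by simp
next
  case (Cons a x)
  show ?case
  proof (cases "x = []")
    case True then show ?thesis by (simp add: maj_Cons)
  next
    case False
    then show ?thesis using Cons by (simp add: maj_Cons des_append algebra_simps)
  qed
qed

definition goodh :: "int \<Rightarrow> nat list \<Rightarrow> bool" where
  "goodh h w = (\<forall>k \<le> length w. int (count_list (take k w) 1) \<le> int (count_list (take k w) 0) + h)"

lemma goodh_append: "goodh h (x @ y) \<longleftrightarrow>
   goodh h x \<and> goodh (h + int (count_list x 0) - int (count_list x 1)) y"
proof
  assume g: "goodh h (x @ y)"
  have "goodh h x" unfolding goodh_def
  proof (intro allI impI)
    fix k assume "k \<le> length x"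
    then show "int (count_list (take k x) 1) \<le> int (count_list (take k x) 0) + h"
      using g[unfolded goodh_def, rule_format, of k] by simp
  qed
  moreover have "goodh (h + int (count_list x 0) - int (count_list x 1)) y" unfolding goodh_def
  proof (intro allI impI)
    fix k assume "k \<le> length y"
    then show "int (count_list (take k y) 1) \<le> int (count_list (take k y) 0) + (h + int (count_list x 0) - int (count_list x 1))"
      using g[unfolded goodh_def, rule_format, of "length x + k"] by simp
  qed
  ultimately show "goodh h x \<and> goodh (h + int (count_list x 0) - int (count_list x 1)) y" ..
next
  assume a: "goodh h x \<and> goodh (h + int (count_list x 0) - int (count_list x 1)) y"
  show "goodh h (x @ y)" unfolding goodh_def
  proof (intro allI impI)
    fix k assume k: "k \<le> length (x @ y)"
    show "int (count_list (take k (x @ y)) 1) \<le> int (count_list (take k (x @ y)) 0) + h"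
    proof (cases "k \<le> length x")
      case True then show ?thesis using a[unfolded goodh_def] by simp
    next
      case False
      then show ?thesis using a[unfolded goodh_def] k
        by (auto simp: take_append dest!: spec[of _ "k - length x"])
    qed
  qed
qed

lemma goodh_Nil[simp]: "goodh h [] \<longleftrightarrow> 0 \<le> h" by (simp add: goodh_def)

lemma goodh_rep1: "goodh h (replicate j 1) \<longleftrightarrow> int j \<le> h"
proof -
  have "(\<forall>k\<le>j. int (min k j) \<le> h) \<longleftrightarrow> int j \<le> h"
  proof
    assume "\<forall>k\<le>j. int (min k j) \<le> h" then show "int j \<le> h" by (metis min.idem order_refl)
  qed auto
  moreover have "count_list (replicate n x) y = (if x = y then n else 0)" for n x y :: nat
    by (induction n) auto
  ultimately show ?thesis unfolding goodh_def by (simp add: take_replicate)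
qed




lemma Dset_rep: "Dset (replicate j a) = {}"
  by (auto simp: Dset_def)
lemma Dset_0rep: "a \<le> b \<Longrightarrow> Dset (a # replicate j b) = {}"
  by (auto simp: Dset_def nth_Cons split: nat.splits)

lemma maj_rep[simp]: "maj (replicate j a) = 0" by (simp add: maj_Dset Dset_rep)
lemma des_rep[simp]: "des (replicate j a) = 0" by (simp add: des_def Dset_rep)

lemma maj_W: assumes "t \<in> {1..m}" shows "maj (W m t) = t + 2" and "des (W m t) = 1"
proof -
  define Z where "Z = 0 # replicate (m+1-t) (1::nat)"
  have mZ: "maj Z = 0" "des Z = 0" by (simp_all add: Z_def maj_Dset des_def Dset_0rep)
  have mR: "maj (replicate t (1::nat)) = 0" "des (replicate t (1::nat)) = 0"
    by (simp_all add: maj_Dset des_def Dset_rep)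
  have t1: "t \<ge> 1" using assms by auto
  have lr: "last (replicate t (1::nat)) = 1" using t1 by (simp add: last_replicate)
  have "maj (replicate t 1 @ Z) = t" "des (replicate t 1 @ Z) = 1"
  proof -
    have "Z \<noteq> []" "hd Z = 0" by (simp_all add: Z_def)
    then show "maj (replicate t 1 @ Z) = t" "des (replicate t 1 @ Z) = 1"
      using t1 by (simp_all add: maj_append des_append mZ mR lr)
  qed
  moreover have "hd (replicate t 1 @ Z) = 1" using t1 by (simp add: hd_append)
  ultimately show "maj (W m t) = t + 2" "des (W m t) = 1"
    unfolding W_def Z_def[symmetric]
    by (simp_all add: maj_append des_append maj_Cons des_Cons)
qed

lemma hd_W[simp]: "hd (W m t) = 0" by (simp add: W_def)
lemma last_W[simp]: "t \<le> m \<Longrightarrow> last (W m t) = 1" by (simp add: W_def last_replicate)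

lemma goodh_single0: "goodh h [0] \<longleftrightarrow> 0 \<le> h"
  by (auto simp: goodh_def le_Suc_eq)

lemma goodh_W: assumes "t \<in> {1..m}" "m \<ge> 2" shows "goodh h (W m t) \<longleftrightarrow> int m - 2 \<le> h"
proof -
  have "goodh h (W m t) \<longleftrightarrow> goodh h [0,0] \<and> goodh (h+2) (replicate t 1) \<and> goodh (h + 2 - int t) [0]
      \<and> goodh (h + 3 - int t) (replicate (m+1-t) 1)"
  proof -
    have e: "W m t = [0,0] @ (replicate t 1 @ ([0] @ replicate (m+1-t) 1))" by (simp add: W_def)
    show ?thesis unfolding e goodh_append using assms by (simp add: algebra_simps)
  qed
  also have "goodh h [0,0] \<longleftrightarrow> 0 \<le> h"
    using goodh_append[of h "[0]" "[0]"] by (auto simp add: goodh_single0)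
  finally show ?thesis using assms goodh_rep1[simplified] by (auto simp: goodh_single0 of_nat_diff)
qed




lemma stp_induct:
  assumes "\<And>w. length w < m+4 \<Longrightarrow> P w"
    "\<And>w. \<not> length w < m+4 \<Longrightarrow> take (m+4) w \<in> Wset m \<Longrightarrow> P w"
    "\<And>w. \<not> length w < m+4 \<Longrightarrow> take (m+4) w \<notin> Wset m \<Longrightarrow> P (drop (m+4) w) \<Longrightarrow> P w"
  shows "P w"
proof (induction w rule: length_induct)
  case (1 w)
  show ?case
  proof (cases "length w < m+4")
    case True then show ?thesis by (rule assms(1))
  next
    case False
    show ?thesis
    proof (cases "take (m+4) w \<in> Wset m")
      case True then show ?thesis using False by (rule assms(2)[rotated])
    next
      case F2: False
      then show ?thesis using False 1 assms(3) by simp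
    qed
  qed
qed

lemma hasW_short: "length w < m+4 \<Longrightarrow> \<not> hasW m w"
  by (subst hasW.simps) simp
lemma hasW_blk: "\<not> length w < m+4 \<Longrightarrow> take (m+4) w \<in> Wset m \<Longrightarrow> hasW m w"
  by (subst hasW.simps) simp
lemma hasW_nblk: "\<not> length w < m+4 \<Longrightarrow> take (m+4) w \<notin> Wset m \<Longrightarrow> hasW m w = hasW m (drop (m+4) w)"
  by (subst hasW.simps) simp

lemma count_W_eq: "s \<le> m+1 \<Longrightarrow> t \<le> m+1 \<Longrightarrow> count_list (W m s) a = count_list (W m t) a"
  by (cases "a = 0"; cases "a = 1") (simp_all add: count_W0 count_W1 count_Wo)

lemma take_W_app[simp]: "t \<le> m+1 \<Longrightarrow> take (m+4) (W m t @ r) = W m t"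
  using length_W[of t m] by (metis append_eq_conv_conj)
lemma drop_W_app[simp]: "t \<le> m+1 \<Longrightarrow> drop (m+4) (W m t @ r) = r"
  using length_W[of t m] by (metis append_eq_conv_conj)

context perm begin

lemma blk_dec: assumes "\<not> length w < m+4" "take (m+4) w \<in> Wset m"
  obtains t where "t \<in> {1..m}" "w = W m t @ drop (m+4) w" "stp m \<sigma> w = W m (\<sigma> t) @ drop (m+4) w"
    "\<sigma> t \<in> {1..m}"
proof -
  from assms(2) obtain t where t: "t \<in> {1..m}" "take (m+4) w = W m t" unfolding Wset_def by auto
  then have "w = W m t @ drop (m+4) w" by (metis append_take_drop_id)
  moreover have "stp m \<sigma> w = W m (\<sigma> t) @ drop (m+4) w" using stp_blk[OF assms] t by simp
  ultimately show ?thesis using that t sig by blast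
qed

lemma count_stp: "count_list (stp m \<sigma> w) a = count_list w a"
proof (induction w rule: stp_induct[where m=m])
  case (1 w) then show ?case by (simp add: stp_short)
next
  case (2 w)
  obtain t where t: "t \<in> {1..m}" "w = W m t @ drop (m+4) w"
    "stp m \<sigma> w = W m (\<sigma> t) @ drop (m+4) w" "\<sigma> t \<in> {1..m}" using blk_dec[OF 2(1) 2(2)] by blast
  then show ?case by (metis count_list_append count_W_eq atLeastAtMost_iff le_SucI add_Suc_right add_0_right Suc_eq_plus1 )
next
  case (3 w) then show ?case by (simp add: stp_nblk) (metis count_list_append append_take_drop_id)
qed

lemma set_stp: "set w \<subseteq> {0,1} \<Longrightarrow> set (stp m \<sigma> w) \<subseteq> {0,1}"
proof (induction w rule: stp_induct[where m=m])
  case (1 w) then show ?case by (simp add: stp_short)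
next
  case (2 w)
  obtain t where t: "t \<in> {1..m}" "w = W m t @ drop (m+4) w"
    "stp m \<sigma> w = W m (\<sigma> t) @ drop (m+4) w" "\<sigma> t \<in> {1..m}" using blk_dec[OF 2(1) 2(2)] by blast
  then show ?case using set_W[of m "\<sigma> t"] 2 by (auto dest: in_set_dropD)
next
  case (3 w) then show ?case by (auto simp add: stp_nblk dest: in_set_dropD in_set_takeD)
qed

lemma goodh_stp: assumes m2: "m \<ge> 2" shows "goodh h (stp m \<sigma> w) \<longleftrightarrow> goodh h w"
proof (induction w arbitrary: h rule: stp_induct[where m=m])
  case (1 w) then show ?case by (simp add: stp_short)
next
  case (2 w)
  obtain t where t: "t \<in> {1..m}" "w = W m t @ drop (m+4) w"
    "stp m \<sigma> w = W m (\<sigma> t) @ drop (m+4) w" "\<sigma> t \<in> {1..m}" using blk_dec[OF 2(1) 2(2)] by blast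
  have c: "count_list (W m (\<sigma> t)) a = count_list (W m t) a" for a
    using t by (intro count_W_eq) auto
  define r where "r = drop (m+4) w"
  have "goodh h (W m (\<sigma> t) @ r) \<longleftrightarrow> goodh h (W m t @ r)"
    unfolding goodh_append c using goodh_W[OF t(1) m2] goodh_W[OF t(4) m2] by simp
  then show ?case using t(2,3) unfolding r_def[symmetric] by metis
next
  case (3 w)
  have "goodh h (take (m+4) w @ stp m \<sigma> (drop (m+4) w)) \<longleftrightarrow> goodh h (take (m+4) w @ drop (m+4) w)"
    unfolding goodh_append using 3(3) by simp
  then show ?case using stp_nblk[OF 3(1) 3(2)] by simp
qed

lemma hasW_stp: "hasW m (stp m \<sigma> w) = hasW m w"
proof (induction w rule: stp_induct[where m=m])
  case (1 w) then show ?case by (simp add: stp_short)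
next
  case (2 w)
  obtain t where t: "t \<in> {1..m}" "w = W m t @ drop (m+4) w"
    "stp m \<sigma> w = W m (\<sigma> t) @ drop (m+4) w" "\<sigma> t \<in> {1..m}" using blk_dec[OF 2(1) 2(2)] by blast
  have "hasW m (W m (\<sigma> t) @ drop (m+4) w)"
    by (rule hasW_blk) (use t in \<open>auto simp: Wset_def\<close>)
  then show ?case using hasW_blk[OF 2(1) 2(2)] t(3) by simp
next
  case (3 w)
  have l: "\<not> length (stp m \<sigma> w) < m+4" using 3(1) by (simp add: length_stp)
  have tk: "take (m+4) (stp m \<sigma> w) = take (m+4) w" "drop (m+4) (stp m \<sigma> w) = stp m \<sigma> (drop (m+4) w)"
    using 3(1) by (simp_all add: stp_nblk[OF 3(1) 3(2)])
  show ?case using hasW_nblk[OF l] hasW_nblk[OF 3(1) 3(2)] 3(2) 3(3) tk by simp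
qed

lemma hd_stp: "w \<noteq> [] \<Longrightarrow> hd (stp m \<sigma> w) = hd w"
proof (induction w rule: stp_induct[where m=m])
  case (1 w) then show ?case by (simp add: stp_short)
next
  case (2 w)
  obtain t where t: "t \<in> {1..m}" "w = W m t @ drop (m+4) w"
    "stp m \<sigma> w = W m (\<sigma> t) @ drop (m+4) w" "\<sigma> t \<in> {1..m}" using blk_dec[OF 2(1) 2(2)] by blast
  have "W m t \<noteq> []" "W m (\<sigma> t) \<noteq> []" by (simp_all add: W_def)
  then show ?case using t by (metis hd_append2 hd_W)
next
  case (3 w)
  have "take (m+4) w \<noteq> []" using 3(1) by (cases w) auto
  then show ?case using stp_nblk[OF 3(1) 3(2)] by (metis hd_append2 append_take_drop_id)
qed

lemma des_stp: "des (stp m \<sigma> w) = des w"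
proof (induction w rule: stp_induct[where m=m])
  case (1 w) then show ?case by (simp add: stp_short)
next
  case (2 w)
  obtain t where t: "t \<in> {1..m}" "w = W m t @ drop (m+4) w"
    "stp m \<sigma> w = W m (\<sigma> t) @ drop (m+4) w" "\<sigma> t \<in> {1..m}" using blk_dec[OF 2(1) 2(2)] by blast
  have "W m t \<noteq> []" "W m (\<sigma> t) \<noteq> []" by (simp_all add: W_def)
  then show ?case using t maj_W[OF t(1)] maj_W[OF t(4)]
    by (metis des_append last_W atLeastAtMost_iff)
next
  case (3 w)
  have ne: "take (m+4) w \<noteq> []" using 3(1) by (cases w) auto
  have em: "stp m \<sigma> (drop (m+4) w) = [] \<longleftrightarrow> drop (m+4) w = []"
    by (metis length_stp length_0_conv)
  have "des (take (m+4) w @ stp m \<sigma> (drop (m+4) w)) = des (take (m+4) w @ drop (m+4) w)"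
    unfolding des_append[OF ne] using em 3(3) hd_stp by (cases "drop (m+4) w = []") auto
  then show ?case using stp_nblk[OF 3(1) 3(2)] by simp
qed

end

lemma stp_inv: assumes "perm m \<sigma>" "\<And>t. t \<in> {1..m} \<Longrightarrow> \<tau> (\<sigma> t) = t"
  shows "stp m \<tau> (stp m \<sigma> w) = w"
proof (induction w rule: stp_induct[where m=m])
  case (1 w) then show ?case by (simp add: stp_short)
next
  case (2 w)
  obtain t where t: "t \<in> {1..m}" "w = W m t @ drop (m+4) w"
    "stp m \<sigma> w = W m (\<sigma> t) @ drop (m+4) w" "\<sigma> t \<in> {1..m}"
    using perm.blk_dec[OF assms(1) 2(1) 2(2)] by blast
  have l: "\<not> length (W m (\<sigma> t) @ drop (m+4) w) < m+4" using t(4) by simp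
  have b: "take (m+4) (W m (\<sigma> t) @ drop (m+4) w) \<in> Wset m" using t(4) by (auto simp: Wset_def)
  show ?case using stp_blk[OF l b] t assms(2)[OF t(1)] by simp
next
  case (3 w)
  have l: "\<not> length (stp m \<sigma> w) < m+4" using 3(1) by (simp add: perm.length_stp[OF assms(1)])
  have tk: "take (m+4) (stp m \<sigma> w) = take (m+4) w" "drop (m+4) (stp m \<sigma> w) = stp m \<sigma> (drop (m+4) w)"
    using 3(1) by (simp_all add: stp_nblk[OF 3(1) 3(2)])
  show ?case using stp_nblk[OF l] tk 3(2) 3(3) by simp
qed




definition nxt :: "nat \<Rightarrow> nat \<Rightarrow> nat" where "nxt m t = (if t < m then t+1 else 1)"
definition prv :: "nat \<Rightarrow> nat \<Rightarrow> nat" where "prv m t = (if t > 1 then t-1 else m)"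

lemma perm_nxt: "m \<ge> 1 \<Longrightarrow> perm m (nxt m)" by (unfold_locales) (auto simp: nxt_def)
lemma perm_prv: "m \<ge> 1 \<Longrightarrow> perm m (prv m)" by (unfold_locales) (auto simp: prv_def)
lemma prv_nxt: "t \<in> {1..m} \<Longrightarrow> prv m (nxt m t) = t" by (auto simp: nxt_def prv_def)
lemma nxt_prv: "t \<in> {1..m} \<Longrightarrow> nxt m (prv m t) = t" by (auto simp: nxt_def prv_def)

lemma maj_stp: assumes m2: "m \<ge> 2" shows "hasW m w \<Longrightarrow> maj (stp m (nxt m) w) mod m = (maj w + 1) mod m"
proof (induction w rule: stp_induct[where m=m])
  case (1 w) then show ?case using hasW_short by blast
next
  case (2 w)
  interpret perm m "nxt m" using perm_nxt m2 by simp
  obtain t where t: "t \<in> {1..m}" "w = W m t @ drop (m+4) w"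
    "stp m (nxt m) w = W m (nxt m t) @ drop (m+4) w" "nxt m t \<in> {1..m}" using blk_dec[OF 2(1) 2(2)] by blast
  define r where "r = drop (m+4) w"
  define c where "c = (if r \<noteq> [] \<and> 1 > hd r then m+4 else 0)"
  have ne: "W m t \<noteq> []" "W m (nxt m t) \<noteq> []" by (simp_all add: W_def)
  have e1: "maj (W m t @ r) = t + 2 + c + maj r + (m+4) * des r"
    unfolding maj_append[OF ne(1)] maj_W[OF t(1)] c_def using t(1) by simp
  have e2: "maj (W m (nxt m t) @ r) = nxt m t + 2 + c + maj r + (m+4) * des r"
    unfolding maj_append[OF ne(2)] maj_W[OF t(4)] c_def using t(4) by simp
  have "(nxt m t + 2 + c + maj r + (m+4) * des r) mod m = (t + 2 + c + maj r + (m+4) * des r + 1) mod m"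
  proof (cases "t < m")
    case True then show ?thesis by (simp add: nxt_def)
  next
    case False
    then have "t = m" using t(1) by simp
    then have "t + 2 + c + maj r + (m+4) * des r + 1 = (nxt m t + 2 + c + maj r + (m+4) * des r) + m"
      by (simp add: nxt_def)
    then show ?thesis by (metis mod_add_self2)
  qed
  then show ?case using t(2,3) e1 e2 unfolding r_def[symmetric] by metis
next
  case (3 w)
  interpret perm m "nxt m" using perm_nxt m2 by simp
  have h: "hasW m (drop (m+4) w)" using 3(4) hasW_nblk[OF 3(1) 3(2)] by simp
  have ne: "take (m+4) w \<noteq> []" using 3(1) by (cases w) auto
  define x where "x = take (m+4) w"
  define v where "v = drop (m+4) w"
  have em: "stp m (nxt m) v = [] \<longleftrightarrow> v = []"
    by (metis length_stp length_0_conv)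
  have hd: "v \<noteq> [] \<Longrightarrow> hd (stp m (nxt m) v) = hd v" by (rule hd_stp)
  define A where "A = maj x + (if v \<noteq> [] \<and> last x > hd v then length x else 0) + length x * des v"
  have e1: "maj (x @ stp m (nxt m) v) = A + maj (stp m (nxt m) v)"
    unfolding maj_append[OF ne[folded x_def]] A_def using em hd des_stp by auto
  have e2: "maj (x @ v) = A + maj v"
    unfolding maj_append[OF ne[folded x_def]] A_def by auto
  have "(A + maj (stp m (nxt m) v)) mod m = (A + maj v + 1) mod m"
    using 3(3)[OF h] unfolding v_def[symmetric] by (metis mod_add_right_eq add.assoc)
  then show ?case using stp_nblk[OF 3(1) 3(2)] e1 e2 unfolding x_def[symmetric] v_def[symmetric]
    by (metis append_take_drop_id x_def v_def)
qed

lemma cat_goodh: "(\<forall>k \<le> length w. count_list (take k w) 1 \<le> count_list (take k w) 0) \<longleftrightarrow> goodh 0 w"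
  unfolding goodh_def by simp

lemma stp_cat: assumes "perm m \<sigma>" "m \<ge> 2" "w \<in> catalan_words n" shows "stp m \<sigma> w \<in> catalan_words n"
  using assms perm.length_stp[OF assms(1)] perm.count_stp[OF assms(1)] perm.set_stp[OF assms(1)]
     perm.goodh_stp[OF assms(1,2)]
  unfolding catalan_words_def cat_goodh by auto




lemma finite_cat: "finite (catalan_words n)"
  by (rule finite_subset[of _ "{xs. set xs \<subseteq> {0,1} \<and> length xs = 2*n}"])
     (auto simp: catalan_words_def intro: finite_lists_length_eq)

definition Dn :: "nat \<Rightarrow> nat \<Rightarrow> nat list set" where
  "Dn m n = {w \<in> catalan_words n. hasW m w}"

definition cls :: "nat \<Rightarrow> nat \<Rightarrow> nat \<Rightarrow> nat list set" where
  "cls m n r = {w \<in> Dn m n. maj w mod m = r}"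

lemma cls_step: assumes m2: "m \<ge> 2" and r: "r < m"
  shows "card (cls m n r) = card (cls m n (Suc r mod m))"
proof -
  have pn: "perm m (nxt m)" and pp: "perm m (prv m)" using m2 perm_nxt perm_prv by auto
  have i1: "stp m (prv m) (stp m (nxt m) w) = w" for w
    by (rule stp_inv[OF pn]) (rule prv_nxt)
  have i2: "stp m (nxt m) (stp m (prv m) w) = w" for w
    by (rule stp_inv[OF pp]) (rule nxt_prv)
  have D1: "w \<in> Dn m n \<Longrightarrow> stp m \<sigma> w \<in> Dn m n" if "perm m \<sigma>" for w \<sigma>
    using stp_cat[OF that m2] perm.hasW_stp[OF that] unfolding Dn_def by auto
  have "bij_betw (stp m (nxt m)) (cls m n r) (cls m n (Suc r mod m))"
  proof (rule bij_betw_byWitness[where f'="stp m (prv m)"])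
    show "\<forall>a\<in>cls m n r. stp m (prv m) (stp m (nxt m) a) = a" using i1 by simp
    show "\<forall>a\<in>cls m n (Suc r mod m). stp m (nxt m) (stp m (prv m) a) = a" using i2 by simp
    show "stp m (nxt m) ` cls m n r \<subseteq> cls m n (Suc r mod m)"
    proof
      fix v assume "v \<in> stp m (nxt m) ` cls m n r"
      then obtain w where w: "w \<in> cls m n r" "v = stp m (nxt m) w" by auto
      then have "hasW m w" unfolding cls_def Dn_def by auto
      then have "maj v mod m = (maj w + 1) mod m" using maj_stp[OF m2] w by simp
      also have "\<dots> = Suc r mod m" using w(1) unfolding cls_def by (metis (mono_tags, lifting) mem_Collect_eq mod_Suc_eq Suc_eq_plus1)
      finally show "v \<in> cls m n (Suc r mod m)" using D1[OF pn] w unfolding cls_def by auto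
    qed
    show "stp m (prv m) ` cls m n (Suc r mod m) \<subseteq> cls m n r"
    proof
      fix v assume "v \<in> stp m (prv m) ` cls m n (Suc r mod m)"
      then obtain w where w: "w \<in> cls m n (Suc r mod m)" "v = stp m (prv m) w" by auto
      have vD: "v \<in> Dn m n" using D1[OF pp] w unfolding cls_def by auto
      then have "hasW m v" unfolding Dn_def by auto
      then have "maj (stp m (nxt m) v) mod m = (maj v + 1) mod m" using maj_stp[OF m2] by simp
      then have "(maj v + 1) mod m = Suc r mod m" using w i2 unfolding cls_def by simp
      then have "maj v mod m = r" using r
        by (auto simp: mod_Suc split: if_splits)
      then show "v \<in> cls m n r" using vD unfolding cls_def by auto
    qed
  qed
  then show ?thesis by (rule bij_betw_same_card)
qed




lemma cls_eq0: assumes "m \<ge> 2" shows "r < m \<Longrightarrow> card (cls m n r) = card (cls m n 0)"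
proof (induction r)
  case 0 then show ?case by simp
next
  case (Suc r)
  then have "card (cls m n r) = card (cls m n (Suc r mod m))" using cls_step[OF assms, of r n] by linarith
  then show ?case using Suc by simp
qed

lemma card_Dn: assumes m2: "m \<ge> 2" shows "card (Dn m n) = m * card (cls m n 0)"
proof -
  have fD: "finite (Dn m n)" using finite_cat unfolding Dn_def by auto
  have "Dn m n = (\<Union>r\<in>{..<m}. cls m n r)"
  proof
    show "Dn m n \<subseteq> (\<Union>r\<in>{..<m}. cls m n r)"
    proof
      fix w assume "w \<in> Dn m n"
      then have "w \<in> cls m n (maj w mod m)" "maj w mod m \<in> {..<m}" using m2 unfolding cls_def by auto
      then show "w \<in> (\<Union>r\<in>{..<m}. cls m n r)" by blast
    qed
    show "(\<Union>r\<in>{..<m}. cls m n r) \<subseteq> Dn m n" unfolding cls_def by blast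
  qed
  then have "card (Dn m n) = (\<Sum>r<m. card (cls m n r))"
  proof -
    have "card (\<Union>r\<in>{..<m}. cls m n r) = (\<Sum>r<m. card (cls m n r))"
      by (rule card_UN_disjoint) (auto simp: cls_def intro: finite_subset[OF _ fD])
    then show ?thesis using \<open>Dn m n = _\<close> by simp
  qed
  also have "\<dots> = (\<Sum>r<m. card (cls m n 0))"
    by (rule sum.cong[OF refl], rule cls_eq0[OF m2], simp)
  finally show ?thesis by simp
qed

definition Av :: "nat \<Rightarrow> nat \<Rightarrow> nat list set" where
  "Av m N = {w. length w = N \<and> set w \<subseteq> {0,1} \<and> \<not> hasW m w}"

lemma card_L: "card {x :: nat list. set x \<subseteq> {0,1} \<and> length x = N} = 2 ^ N"
proof -
  have "card {0::nat,1} = 2" by simp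
  then show ?thesis using card_lists_length_eq[of "{0::nat,1}" N] by (simp add: numeral_2_eq_2)
qed

lemma fL: "finite {x :: nat list. set x \<subseteq> {0,1} \<and> length x = N}"
  by (rule finite_lists_length_eq) simp

lemma finite_Av: "finite (Av m N)"
  unfolding Av_def by (rule finite_subset[OF _ fL[of N]]) blast

definition Xs :: "nat \<Rightarrow> nat list set" where
  "Xs m = {x :: nat list. set x \<subseteq> {0,1} \<and> length x = m+4 \<and> x \<notin> Wset m}"

lemma finite_Xs: "finite (Xs m)"
  unfolding Xs_def by (rule finite_subset[OF _ fL[of "m+4"]]) blast

lemma card_Xs: assumes "m \<ge> 1" shows "card (Xs m) \<le> 2^(m+4) - 1"
proof -
  have "W m 1 \<in> Wset m" using assms unfolding Wset_def by simp
  moreover have WL: "W m 1 \<in> {x :: nat list. set x \<subseteq> {0,1} \<and> length x = m+4}"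
    using set_W[of m 1] length_W[of 1 m] by simp
  ultimately have "Xs m \<subseteq> {x :: nat list. set x \<subseteq> {0,1} \<and> length x = m+4} - {W m 1}"
    unfolding Xs_def by blast
  then have "card (Xs m) \<le> card ({x :: nat list. set x \<subseteq> {0,1} \<and> length x = m+4} - {W m 1})"
    by (rule card_mono[OF finite_Diff[OF fL]])
  also have "\<dots> = 2^(m+4) - 1"
    using card_Diff_singleton[OF WL] card_L[of "m+4"] by simp
  finally show ?thesis .
qed

lemma Av_split: assumes "\<not> N < m+4"
  shows "Av m N \<subseteq> (\<lambda>(x,y). x @ y) ` (Xs m \<times> Av m (N - (m+4)))"
proof
  fix w assume w: "w \<in> Av m N"
  have l: "\<not> length w < m + 4" using w assms unfolding Av_def by simp
  have nb: "take (m+4) w \<notin> Wset m" using w hasW_blk[OF l] unfolding Av_def by auto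
  have "\<not> hasW m (drop (m+4) w)" using w hasW_nblk[OF l nb] unfolding Av_def by auto
  moreover have "set (take (m+4) w) \<subseteq> {0,1}" "set (drop (m+4) w) \<subseteq> {0,1}"
    using w unfolding Av_def by (auto dest: in_set_takeD in_set_dropD)
  ultimately have "(take (m+4) w, drop (m+4) w) \<in> Xs m \<times> Av m (N - (m+4))"
    using w nb l unfolding Xs_def Av_def by simp
  then show "w \<in> (\<lambda>(x,y). x @ y) ` (Xs m \<times> Av m (N - (m+4)))"
    by (metis (no_types, lifting) append_take_drop_id case_prod_conv image_eqI)
qed

lemma card_Av: assumes "m \<ge> 1"
  shows "card (Av m N) \<le> (2^(m+4) - 1)^(N div (m+4)) * 2^(N mod (m+4))"
proof (induction N rule: less_induct)
  case (less N)
  show ?case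
  proof (cases "N < m+4")
    case True
    have "Av m N \<subseteq> {x :: nat list. set x \<subseteq> {0,1} \<and> length x = N}" unfolding Av_def by blast
    then have "card (Av m N) \<le> 2 ^ N"
      using card_mono[OF fL] card_L by metis
    then show ?thesis using True by simp
  next
    case False
    have fP: "finite (Xs m \<times> Av m (N - (m+4)))" using finite_Xs finite_Av by simp
    have "card (Av m N) \<le> card ((\<lambda>(x,y). x @ y) ` (Xs m \<times> Av m (N - (m+4))))"
      by (rule card_mono[OF finite_imageI[OF fP] Av_split[OF False]])
    also have "\<dots> \<le> card (Xs m \<times> Av m (N - (m+4)))" by (rule card_image_le[OF fP])
    also have "\<dots> = card (Xs m) * card (Av m (N - (m+4)))" by (simp add: card_cartesian_product)
    also have "\<dots> \<le> (2^(m+4) - 1) * ((2^(m+4) - 1)^((N - (m+4)) div (m+4)) * 2^((N - (m+4)) mod (m+4)))"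
      using less[of "N - (m+4)"] False card_Xs[OF assms] by (intro mult_mono) auto
    also have "\<dots> = (2^(m+4) - 1)^(N div (m+4)) * 2^(N mod (m+4))"
    proof -
      have "N div (m+4) = Suc ((N - (m+4)) div (m+4))" "N mod (m+4) = (N - (m+4)) mod (m+4)"
        using False by (simp_all add: le_div_geq le_mod_geq)
      then show ?thesis by simp
    qed
    finally show ?thesis .
  qed
qed




definition Bn :: "nat \<Rightarrow> nat list set" where
  "Bn n = {w. length w = 2*n \<and> set w \<subseteq> {0,1} \<and> count_list w 0 = n \<and> count_list w 1 = n}"

lemma Bn_perm: "Bn n = permutations_of_multiset (replicate_mset n 0 + replicate_mset n 1)"
proof (rule set_eqI)
  fix w :: "nat list"
  let ?M = "replicate_mset n 0 + replicate_mset n (1::nat)"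
  show "w \<in> Bn n \<longleftrightarrow> w \<in> permutations_of_multiset ?M"
  proof
    assume w: "w \<in> Bn n"
    have "mset w = ?M"
    proof (rule multiset_eqI)
      fix x
      show "count (mset w) x = count ?M x"
      proof (cases "x = 0 \<or> x = 1")
        case True then show ?thesis using w unfolding Bn_def count_mset by auto
      next
        case False
        then have "x \<notin> set w" using w unfolding Bn_def by auto
        then show ?thesis using False unfolding count_mset by simp
      qed
    qed
    then show "w \<in> permutations_of_multiset ?M" by (rule permutations_of_multisetI)
  next
    assume "w \<in> permutations_of_multiset ?M"
    then have m: "mset w = ?M" by (rule permutations_of_multisetD)
    have "length w = 2*n" using arg_cong[OF m, of size] by simp
    moreover have "set w \<subseteq> {0,1}" using arg_cong[OF m, of set_mset] by (auto split: if_splits)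
    moreover have "count_list w 0 = n" "count_list w 1 = n"
      using arg_cong[OF m, of "\<lambda>M. count M 0"] arg_cong[OF m, of "\<lambda>M. count M 1"]
      unfolding count_mset by simp_all
    ultimately show "w \<in> Bn n" unfolding Bn_def by simp
  qed
qed

lemma card_Bn: "card (Bn n) = (2*n) choose n"
proof (cases "n = 0")
  case True
  then have "Bn n = {[]}" unfolding Bn_def by auto
  then show ?thesis using True by simp
next
  case False
  let ?M = "replicate_mset n 0 + replicate_mset n (1::nat)"
  have s: "set_mset ?M = {0,1}" using False by auto
  have "card (Bn n) = fact (2*n) div (fact n * fact n)"
    unfolding Bn_perm card_permutations_of_multiset(1) s by (simp add: mult_2)
  then show ?thesis using binomial_fact'[of n "2*n"] by simp
qed

lemma count_rotate: "count_list (rotate k xs) a = count_list xs a"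
proof -
  have "count_list (drop j xs) a + count_list (take j xs) a = count_list xs a" for j
    using count_list_append[of "take j xs" "drop j xs" a] by simp
  then show ?thesis by (simp add: rotate_drop_take)
qed

lemma rot_cat: assumes n: "n \<ge> 1" and u: "u \<in> Bn n"
  shows "\<exists>k<2*n. rotate k u \<in> catalan_words n"
proof -
  define f where "f k = int (count_list (take k u) 0) - int (count_list (take k u) 1)" for k
  have lu: "length u = 2*n" using u unfolding Bn_def by simp
  have "0 \<in> {..<2*n}" using n by simp
  then have fin: "finite (f ` {..<2*n})" "f ` {..<2*n} \<noteq> {}" by blast+
  obtain k where k: "k < 2*n" "f k = Min (f ` {..<2*n})" using Min_in[OF fin] by auto
  have fj: "f k \<le> f j" if "j \<le> 2*n" for j
  proof (cases "j < 2*n")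
    case True then show ?thesis using k Min_le[OF fin(1)] by simp
  next
    case False
    then have "j = 2*n" using that by simp
    then have "f j = f 0" using u lu unfolding f_def Bn_def by simp
    then show ?thesis using k Min_le[OF fin(1), of "f 0"] n by simp
  qed
  have rk: "rotate k u = drop k u @ take k u" using k lu by (simp add: rotate_drop_take)
  have tot: "int (count_list (drop k u) 0) - int (count_list (drop k u) 1) = - f k"
  proof -
    have "count_list u a = count_list (take k u) a + count_list (drop k u) a" for a
      using count_list_append[of "take k u" "drop k u" a] by simp
    then show ?thesis using u unfolding f_def Bn_def by simp
  qed
  have g1: "goodh 0 (drop k u)" unfolding goodh_def
  proof (intro allI impI)
    fix j assume j: "j \<le> length (drop k u)"
    have "take (k + j) u = take k u @ take j (drop k u)" by (simp add: take_add)
    then have "f (k+j) = f k + (int (count_list (take j (drop k u)) 0) - int (count_list (take j (drop k u)) 1))"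
      unfolding f_def by simp
    moreover have "f k \<le> f (k+j)" using fj[of "k+j"] j lu k by simp
    ultimately show "int (count_list (take j (drop k u)) 1) \<le> int (count_list (take j (drop k u)) 0) + 0" by simp
  qed
  have g2: "goodh (0 + int (count_list (drop k u) 0) - int (count_list (drop k u) 1)) (take k u)"
    unfolding goodh_def
  proof (intro allI impI)
    fix j assume j: "j \<le> length (take k u)"
    then have "take j (take k u) = take j u" by simp
    moreover have "f k \<le> f j" using fj j k by simp
    ultimately show "int (count_list (take j (take k u)) 1) \<le> int (count_list (take j (take k u)) 0)
        + (0 + int (count_list (drop k u) 0) - int (count_list (drop k u) 1))"
      using tot unfolding f_def by simp
  qed
  have "goodh 0 (rotate k u)" unfolding rk goodh_append using g1 g2 by simp
  then have "rotate k u \<in> catalan_words n"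
    using u count_rotate[of k u] unfolding catalan_words_def Bn_def cat_goodh by simp
  then show ?thesis using k by blast
qed

lemma card_Bn_le: assumes n: "n \<ge> 1" shows "card (Bn n) \<le> (2*n+1) * card (catalan_words n)"
proof -
  have sub: "Bn n \<subseteq> (\<Union>w\<in>catalan_words n. (\<lambda>j. rotate j w) ` {..2*n})"
  proof
    fix u assume u: "u \<in> Bn n"
    obtain k where k: "k < 2*n" "rotate k u \<in> catalan_words n" using rot_cat[OF n u] by blast
    have lu: "length u = 2*n" using u unfolding Bn_def by simp
    have "rotate (2*n - k) (rotate k u) = rotate (2*n - k + k) u" by (rule rotate_rotate)
    also have "2*n - k + k = length u" using k lu by simp
    also have "rotate (length u) u = u" by simp
    finally have "rotate (2*n - k) (rotate k u) = u" .
    moreover have "2*n-k \<in> {..2*n}" by simp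
    ultimately have "u \<in> (\<lambda>j. rotate j (rotate k u)) ` {..2*n}" by (metis image_eqI)
    then show "u \<in> (\<Union>w\<in>catalan_words n. (\<lambda>j. rotate j w) ` {..2*n})" using k(2) by blast
  qed
  have fU: "finite (\<Union>w\<in>catalan_words n. (\<lambda>j. rotate j w) ` {..2*n})"
    by (intro finite_UN_I finite_cat finite_imageI finite_atMost)
  have "card (Bn n) \<le> card (\<Union>w\<in>catalan_words n. (\<lambda>j. rotate j w) ` {..2*n})"
    by (rule card_mono[OF fU sub])
  also have "\<dots> \<le> (\<Sum>w\<in>catalan_words n. card ((\<lambda>j. rotate j w) ` {..2*n}))"
    by (rule card_UN_le[OF finite_cat])
  also have "\<dots> \<le> (\<Sum>w\<in>catalan_words n. 2*n+1)"
  proof (rule sum_mono)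
    fix w
    have "card ((\<lambda>j. rotate j w) ` {..2*n}) \<le> card {..2*n}" by (rule card_image_le[OF finite_atMost])
    then show "card ((\<lambda>j. rotate j w) ` {..2*n}) \<le> 2*n+1" by simp
  qed
  also have "\<dots> = (2*n+1) * card (catalan_words n)" by simp
  finally show ?thesis .
qed




lemma CD_sub: "catalan_words n - Dn m n \<subseteq> Av m (2*n)"
  unfolding catalan_words_def Dn_def Av_def by auto

lemma key: assumes m2: "m \<ge> 2" and r: "r < m" and C0: "card (catalan_words n) > 0"
  shows "\<bar>real (card {w \<in> catalan_words n. maj w mod m = r}) / real (card (catalan_words n)) - 1 / real m\<bar>
     \<le> real (card (catalan_words n - Dn m n)) / real (card (catalan_words n))"
proof -
  define C where "C = catalan_words n"
  define D where "D = Dn m n"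
  define E where "E = C - D"
  have fC: "finite C" unfolding C_def by (rule finite_cat)
  have DC: "D \<subseteq> C" unfolding D_def C_def Dn_def by auto
  have cC: "card C = card D + card E" unfolding E_def using DC fC
    by (metis card_Diff_subset card_mono finite_subset le_add_diff_inverse)
  define Er where "Er = {w \<in> E. maj w mod m = r}"
  have split: "{w \<in> C. maj w mod m = r} = cls m n r \<union> Er" unfolding cls_def Er_def E_def D_def C_def
    using DC[unfolded D_def C_def] by auto
  have disj: "cls m n r \<inter> Er = {}" unfolding cls_def Er_def E_def D_def by auto
  have fE: "finite E" "finite Er" "finite (cls m n r)" using fC unfolding E_def Er_def cls_def D_def C_def Dn_def
    by auto
  have cr: "card {w \<in> C. maj w mod m = r} = card (cls m n r) + card Er"
    unfolding split using disj fE by (simp add: card_Un_disjoint)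
  have ErE: "card Er \<le> card E" unfolding Er_def using fE by (intro card_mono) auto
  have mD: "card D = m * card (cls m n r)" unfolding D_def using card_Dn[OF m2] cls_eq0[OF m2 r] by simp
  have Cp: "real (card C) > 0" using C0 unfolding C_def by simp
  have mp: "real m > 0" using m2 by simp
  have "real (card {w \<in> C. maj w mod m = r}) / real (card C) - 1 / real m
      = (real m * real (card Er) - real (card E)) / (real m * real (card C))"
    using Cp mp unfolding cr by (simp add: cC mD field_simps)
  moreover have "\<bar>real m * real (card Er) - real (card E)\<bar> \<le> real m * real (card E)"
  proof -
    have "real (card Er) \<le> real (card E)" using ErE by simp
    then have a: "real m * real (card Er) \<le> real m * real (card E)" by (rule mult_left_mono) simp
    have b: "1 * real (card E) \<le> real m * real (card E)" using m2 by (intro mult_right_mono) auto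
    have c: "0 \<le> real m * real (card Er)" by simp
    show ?thesis using a b c by linarith
  qed
  ultimately have "\<bar>real (card {w \<in> C. maj w mod m = r}) / real (card C) - 1 / real m\<bar>
       \<le> (real m * real (card E)) / (real m * real (card C))"
  proof -
    have "\<bar>real m * real (card Er) - real (card E)\<bar> / (real m * real (card C))
       \<le> (real m * real (card E)) / (real m * real (card C))"
      by (rule divide_right_mono) (use \<open>\<bar>_\<bar> \<le> _\<close> Cp mp in simp_all)
    then show ?thesis using \<open>_ = (real m * real (card Er) - real (card E)) / (real m * real (card C))\<close> Cp mp
      by (simp add: abs_div)
  qed
  also have "\<dots> = real (card E) / real (card C)" using mp by simp
  finally show ?thesis unfolding C_def E_def D_def .
qed




lemma C_lower: assumes n: "n \<ge> 1"
  shows "4^n / (2*real n * (2*real n+1)) \<le> real (card (catalan_words n))"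
proof -
  have "4^n / (2*real n) \<le> real ((2*n) choose n)" using n by (intro central_binomial_lower_bound) simp
  also have "\<dots> \<le> real ((2*n+1) * card (catalan_words n))"
  proof -
    have "(2*n) choose n \<le> (2*n+1) * card (catalan_words n)" using card_Bn_le[OF n] card_Bn[of n] by simp
    then show ?thesis by (simp only: of_nat_le_iff)
  qed
  finally have "4^n / (2*real n) \<le> (2*real n+1) * real (card (catalan_words n))" by (simp add: algebra_simps)
  moreover have p1: "(0::real) < 2*real n" using n by simp
  ultimately have "4^n \<le> (2*real n+1) * real (card (catalan_words n)) * (2*real n)"
    by (simp add: pos_divide_le_eq)
  moreover have p2: "(0::real) < 2*real n * (2*real n+1)" using n by simp
  ultimately show ?thesis by (simp add: pos_divide_le_eq algebra_simps)
qed

lemma ratio_bound: assumes m2: "m \<ge> 2" and n: "n \<ge> 1"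
  shows "real (card (catalan_words n - Dn m n)) / real (card (catalan_words n))
    \<le> 2^(m+4) * real (m+4)^2 * ((real ((2*n) div (m+4)) + 1)^2 * ((2^(m+4) - 1) / 2^(m+4))^((2*n) div (m+4)))"
proof -
  define K where "K = m+4"
  define q where "q = (2*n) div K"
  define C where "C = real (card (catalan_words n))"
  define E where "E = real (card (catalan_words n - Dn m n))"
  have K1: "K \<ge> 1" unfolding K_def by simp
  have "card (catalan_words n - Dn m n) \<le> card (Av m (2*n))"
    by (rule card_mono[OF finite_Av CD_sub])
  also have "\<dots> \<le> (2^K - 1)^q * 2^((2*n) mod K)" unfolding K_def q_def using m2 by (intro card_Av) simp
  also have "\<dots> \<le> (2^K - 1)^q * 2^K" by (intro mult_left_mono power_increasing) (simp_all add: K_def)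
  finally have "real (card (catalan_words n - Dn m n)) \<le> real ((2^K - 1)^q * 2^K)"
    by (simp only: of_nat_le_iff)
  moreover have "real ((2^K - 1)^q * 2^K) = ((2::real)^K - 1)^q * 2^K"
    by (simp add: of_nat_diff)
  ultimately have Eb: "E \<le> (2^K - 1)^q * 2^K" unfolding E_def by simp
  have Cl: "4^n / (2*real n * (2*real n+1)) \<le> C" unfolding C_def by (rule C_lower[OF n])
  have P: "0 < 2*real n * (2*real n+1)" using n by simp
  have "0 < 4^n / (2*real n * (2*real n+1))" using P by simp
  then have Cp: "0 < C" using Cl by linarith
  have "E / C \<le> E / (4^n / (2*real n * (2*real n+1)))"
    using Cl Cp P by (intro divide_left_mono) (simp_all add: E_def)
  also have "\<dots> = E * (2*real n * (2*real n+1)) / 4^n" by simp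
  also have "\<dots> \<le> ((2^K - 1)^q * 2^K) * (2*real n * (2*real n+1)) / 4^n"
    using Eb P by (intro divide_right_mono mult_right_mono) simp_all
  also have "\<dots> = 2^K * (2*real n * (2*real n+1)) * ((2^K - 1)^q / 4^n)" by simp
  also have "\<dots> \<le> 2^K * (real K^2 * (real q + 1)^2) * (((2^K - 1) / 2^K)^q)"
  proof (rule mult_mono)
    have e: "2*n = K*q + (2*n) mod K" unfolding q_def by simp
    have "(2*n) mod K < K" using K1 by simp
    then have "2*n < K * (q+1)" using e by (simp add: algebra_simps)
    then have a: "2*n + 1 \<le> K * (q+1)" "2*n \<le> K*(q+1)" by simp_all
    have "(2*n) * (2*n+1) \<le> (K*(q+1)) * (K*(q+1))" by (rule mult_le_mono[OF a(2) a(1)])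
    then have "real ((2*n) * (2*n+1)) \<le> real ((K*(q+1)) * (K*(q+1)))" by (simp only: of_nat_le_iff)
    then have "2*real n * (2*real n+1) \<le> real K^2 * (real q + 1)^2" by (simp add: power2_eq_square algebra_simps)
    then show "2^K * (2*real n * (2*real n+1)) \<le> 2^K * (real K^2 * (real q + 1)^2)" by simp
    have "K * q \<le> 2*n" unfolding q_def by (simp add: mult.commute)
    then have "(2::real)^(K*q) \<le> 2^(2*n)" by (intro power_increasing) simp_all
    then have "(2^K)^q \<le> (4::real)^n" by (simp add: power_mult)
    then have "((2::real)^K - 1)^q / 4^n \<le> (2^K - 1)^q / (2^K)^q"
      by (intro divide_left_mono) (simp_all add: K_def)
    then show "((2::real)^K - 1)^q / 4^n \<le> ((2^K - 1) / 2^K)^q" by (simp add: power_divide)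
  qed (simp_all add: K_def)
  finally show ?thesis unfolding C_def E_def K_def q_def by (simp add: mult.assoc)
qed




theorem theorem3:
  fixes m r :: nat
  assumes "m \<ge> 2" and "r \<le> m - 1"
  shows "(\<lambda>n. real (card {w \<in> catalan_words n. maj w mod m = r})
               / real (card (catalan_words n))) \<longlonglongrightarrow> 1 / real m"
proof -
  have m2: "m \<ge> 2" and r: "r < m" using assms by auto
  define K where "K = m + 4"
  define \<rho> :: real where "\<rho> = (2^K - 1) / 2^K"
  have \<rho>0: "0 \<le> \<rho>" and \<rho>1: "\<rho> < 1" unfolding \<rho>_def by (simp_all add: K_def)
  define \<sigma> where "\<sigma> = sqrt \<rho>"
  have \<sigma>0: "0 \<le> \<sigma>" and \<sigma>1: "\<sigma> < 1" using \<rho>0 \<rho>1 unfolding \<sigma>_def by simp_all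
  define g where "g q = (real q + 1)^2 * \<rho>^q" for q :: nat
  have g_eq: "g q = ((real q + 1) * \<sigma>^q)^2" for q
  proof -
    have "(\<sigma>^q)^2 = \<rho>^q" unfolding \<sigma>_def using \<rho>0
      by (simp add: power_mult[symmetric] mult.commute[of q 2] power_mult)
    then show ?thesis unfolding g_def by (simp add: power_mult_distrib)
  qed
  have "(\<lambda>q. real q * \<sigma>^q) \<longlonglongrightarrow> 0" using \<sigma>0 \<sigma>1 by (intro powser_times_n_limit_0) simp
  moreover have "(\<lambda>q. \<sigma>^q) \<longlonglongrightarrow> 0" using \<sigma>0 \<sigma>1 by (intro LIMSEQ_power_zero) simp
  ultimately have "(\<lambda>q. real q * \<sigma>^q + \<sigma>^q) \<longlonglongrightarrow> 0 + 0" by (rule tendsto_add)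
  then have "(\<lambda>q. (real q + 1) * \<sigma>^q) \<longlonglongrightarrow> 0" by (simp add: algebra_simps)
  then have "(\<lambda>q. ((real q + 1) * \<sigma>^q)^2) \<longlonglongrightarrow> 0^2" by (rule tendsto_power)
  then have glim: "g \<longlonglongrightarrow> 0" unfolding g_eq by simp
  have qlim: "filterlim (\<lambda>n. (2*n) div K) sequentially sequentially"
    unfolding filterlim_at_top eventually_sequentially
  proof
    fix Z
    show "\<exists>N. \<forall>n\<ge>N. Z \<le> 2 * n div K"
    proof (intro exI allI impI)
      fix n assume "Z * K \<le> n"
      then have "Z * K \<le> 2*n" by simp
      then have "Z * K div K \<le> 2*n div K" by (rule div_le_mono)
      then show "Z \<le> 2*n div K" unfolding K_def by simp
    qed
  qed
  have gq: "(\<lambda>n. g ((2*n) div K)) \<longlonglongrightarrow> 0" using filterlim_compose[OF glim qlim] .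
  define b where "b n = 2^K * real K^2 * g ((2*n) div K)" for n
  have blim: "b \<longlonglongrightarrow> 0" unfolding b_def using tendsto_mult_right_zero[OF gq] by simp
  define f where "f n = real (card {w \<in> catalan_words n. maj w mod m = r}) / real (card (catalan_words n))" for n
  have ev: "eventually (\<lambda>n. \<bar>f n - 1 / real m\<bar> \<le> b n) sequentially"
    unfolding eventually_sequentially
  proof (intro exI allI impI)
    fix n :: nat assume n: "1 \<le> n"
    have "0 < 4^n / (2*real n * (2*real n+1))" using n by simp
    then have "0 < real (card (catalan_words n))" using C_lower[OF n] by linarith
    then have C0: "card (catalan_words n) > 0" by simp
    show "\<bar>f n - 1 / real m\<bar> \<le> b n"
      using key[OF m2 r C0] ratio_bound[OF m2 n] unfolding f_def b_def g_def \<rho>_def K_def by simp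
  qed
  have lo: "(\<lambda>n. 1 / real m - b n) \<longlonglongrightarrow> 1 / real m" using tendsto_diff[OF tendsto_const blim] by simp
  have hi: "(\<lambda>n. 1 / real m + b n) \<longlonglongrightarrow> 1 / real m" using tendsto_add[OF tendsto_const blim] by simp
  have "f \<longlonglongrightarrow> 1 / real m"
  proof (rule tendsto_sandwich[OF _ _ lo hi])
    show "eventually (\<lambda>n. 1 / real m - b n \<le> f n) sequentially"
      using ev by eventually_elim (simp add: abs_le_iff)
    show "eventually (\<lambda>n. f n \<le> 1 / real m + b n) sequentially"
      using ev by eventually_elim (simp add: abs_le_iff)
  qed
  then show ?thesis unfolding f_def .
qed


end
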